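(* Let $\varepsilon>0$ and let $f(z,\omega)=\sum_{n=0}^{+\infty}\xi_n(\omega)a_nz^n$, where $(\xi_n)$ are independent standard complex gaussian random variables and $a_n\in\mathbb{C}$ satisfy $\#\{n\colon a_n\neq0\}=+\infty$, $\varlimsup_{n\to+\infty}\sqrt[n]{|a_n|}=0$ and $a_0\neq0$. Then there exists a set $E\subset(1;+\infty)$ of finite logarithmic measure such that for all $r\in(1;+\infty)\setminus E$, $$p_0(r)\le s(r)+N(r)\exp\{(2+\varepsilon)\sqrt{\ln N(r)}\}.$$
   Context: A standard complex gaussian random variable has density $\frac1\pi e^{-|z|^2}$ on $\mathbb{C}$. $n_f(r,\omega)$ is the number of zeros of $z\mapsto f(z,\omega)$ in the disc $\{|z|<r\}$, and $p_0(r)=\ln^-P\{\omega\colon n_f(r,\omega)=0\}=-\ln P\{\omega\colon n_f(r,\omega)=0\}$. $N(r)=\#\{n\colon\ln(|a_n|r^n)>0\}$ and $s(r)=2\sum_{n\colon\ln(|a_n|r^n)>0}\ln(|a_n|r^n)$. A set $E\subset(1,+\infty)$ has finite logarithmic measure if $\int_E\frac{dr}{r}<+\infty$. *)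

theory Defs
  imports "HOL-Probability.Probability"
begin

definition std_complex_gaussian :: "'w measure \<Rightarrow> ('w \<Rightarrow> complex) \<Rightarrow> bool" where
  "std_complex_gaussian M X \<longleftrightarrow>
     distributed M lborel X (\<lambda>z. ennreal (exp (- (cmod z)\<^sup>2) / pi))"

definition gaf :: "(nat \<Rightarrow> complex) \<Rightarrow> (nat \<Rightarrow> 'w \<Rightarrow> complex) \<Rightarrow> 'w \<Rightarrow> complex \<Rightarrow> complex" where
  "gaf a \<xi> \<omega> z = (\<Sum>n. \<xi> n \<omega> * a n * z ^ n)"

text \<open>p_0(r) = -ln P{omega : n_f(r,omega) = 0}; the event n_f(r,omega)=0 is the event that
  z \<mapsto> f(z,omega) has no zero in the open disc |z| < r.\<close>
definition p0 :: "'w measure \<Rightarrow> (nat \<Rightarrow> complex) \<Rightarrow> (nat \<Rightarrow> 'w \<Rightarrow> complex) \<Rightarrow> real \<Rightarrow> real" where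
  "p0 M a \<xi> r = - ln (measure M {\<omega> \<in> space M. \<forall>z. cmod z < r \<longrightarrow> gaf a \<xi> \<omega> z \<noteq> 0})"

definition Nset :: "(nat \<Rightarrow> complex) \<Rightarrow> real \<Rightarrow> nat set" where
  "Nset a r = {n. ln (cmod (a n) * r ^ n) > 0}"

definition NN :: "(nat \<Rightarrow> complex) \<Rightarrow> real \<Rightarrow> nat" where
  "NN a r = card (Nset a r)"

definition ss :: "(nat \<Rightarrow> complex) \<Rightarrow> real \<Rightarrow> real" where
  "ss a r = 2 * (\<Sum>n\<in>Nset a r. ln (cmod (a n) * r ^ n))"

definition finite_log_measure :: "real set \<Rightarrow> bool" where
  "finite_log_measure E \<longleftrightarrow> E \<in> sets lborel \<and>
     (\<integral>\<^sup>+ r. indicator E r / ennreal r \<partial>lborel) < \<infinity>"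

end

theory Submission
  imports Defs "HOL-Real_Asymp.Real_Asymp"
begin


lemma gauss_ball:
  fixes M :: "'w measure" and X :: "'w \<Rightarrow> complex"
  assumes P: "prob_space M" and G: "std_complex_gaussian M X" and r: "\<rho> > 0"
  shows "measure M {\<omega>\<in>space M. X \<omega> \<in> ball c \<rho>} \<ge> \<rho>\<^sup>2 * exp (-(cmod c + \<rho>)\<^sup>2)"
proof -
  interpret prob_space M by fact
  let ?f = "\<lambda>z::complex. ennreal (exp (- (cmod z)\<^sup>2) / pi)"
  have D: "distributed M lborel X ?f" using G unfolding std_complex_gaussian_def .
  let ?k = "exp (-(cmod c + \<rho>)\<^sup>2) / pi"
  have "emeasure M (X -` ball c \<rho> \<inter> space M) = (\<integral>\<^sup>+z. ?f z * indicator (ball c \<rho>) z \<partial>lborel)"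
    by (rule distributed_emeasure[OF D]) simp
  also have "\<dots> \<ge> (\<integral>\<^sup>+z. ennreal ?k * indicator (ball c \<rho>) z \<partial>lborel)"
  proof (rule nn_integral_mono)
    fix z :: complex
    show "ennreal ?k * indicator (ball c \<rho>) z \<le> ?f z * indicator (ball c \<rho>) z"
    proof (cases "z \<in> ball c \<rho>")
      case True
      then have "cmod z \<le> cmod c + \<rho>"
        by (metis add_le_cancel_left dist_commute dist_norm mem_ball norm_triangle_sub less_imp_le order_trans add.commute)
      then have "(cmod z)\<^sup>2 \<le> (cmod c + \<rho>)\<^sup>2" by (simp add: power_mono)
      then have "?k \<le> exp (- (cmod z)\<^sup>2) / pi" by (simp add: divide_right_mono)
      then show ?thesis using True by (simp add: ennreal_leI)
    qed simp
  qed
  also have "(\<integral>\<^sup>+z. ennreal ?k * indicator (ball c \<rho>) z \<partial>lborel) = ennreal ?k * emeasure lborel (ball c \<rho>)"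
    by (rule nn_integral_cmult_indicator) simp
  also have "emeasure lborel (ball c \<rho>) = ennreal (pi * \<rho>^2)"
    using emeasure_ball[of \<rho> c] r by (simp add: unit_ball_vol_2)
  finally have "ennreal ?k * ennreal (pi * \<rho>^2) \<le> emeasure M (X -` ball c \<rho> \<inter> space M)" .
  moreover have "ennreal ?k * ennreal (pi * \<rho>^2) = ennreal (\<rho>\<^sup>2 * exp (-(cmod c + \<rho>)\<^sup>2))"
    by (subst ennreal_mult[symmetric]) (auto simp: field_simps)
  ultimately have "ennreal (\<rho>\<^sup>2 * exp (-(cmod c + \<rho>)\<^sup>2)) \<le> emeasure M (X -` ball c \<rho> \<inter> space M)" by simp
  moreover have "X -` ball c \<rho> \<inter> space M = {\<omega>\<in>space M. X \<omega> \<in> ball c \<rho>}" by auto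
  ultimately have "ennreal (\<rho>\<^sup>2 * exp (-(cmod c + \<rho>)\<^sup>2)) \<le> ennreal (measure M {\<omega>\<in>space M. X \<omega> \<in> ball c \<rho>})"
    by (simp add: emeasure_eq_measure)
  then show ?thesis by (simp add: ennreal_le_iff)
qed

lemma gauss_total:
  fixes M :: "'w measure" and X :: "'w \<Rightarrow> complex"
  assumes P: "prob_space M" and G: "std_complex_gaussian M X"
  shows "(\<integral>\<^sup>+z. ennreal (exp (- (cmod z)\<^sup>2) / pi) \<partial>lborel) = 1"
proof -
  interpret prob_space M by fact
  let ?f = "\<lambda>z::complex. ennreal (exp (- (cmod z)\<^sup>2) / pi)"
  have D: "distributed M lborel X ?f" using G unfolding std_complex_gaussian_def .
  have "emeasure M (X -` UNIV \<inter> space M) = (\<integral>\<^sup>+z. ?f z * indicator UNIV z \<partial>lborel)"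
    by (rule distributed_emeasure[OF D]) simp
  then show ?thesis by (simp add: emeasure_space_1)
qed

lemma gauss_half_total:
  fixes M :: "'w measure" and X :: "'w \<Rightarrow> complex"
  assumes P: "prob_space M" and G: "std_complex_gaussian M X"
  shows "(\<integral>\<^sup>+z. ennreal (exp (- (cmod z)\<^sup>2 / 2) / pi) \<partial>lborel) = 2"
proof -
  let ?g = "\<lambda>z::complex. ennreal (exp (- (cmod z)\<^sup>2 / 2) / pi)"
  have L: "(lborel::complex measure) = density (distr lborel borel (\<lambda>x. 0 + sqrt 2 *\<^sub>R x)) (\<lambda>_. \<bar>sqrt 2\<bar>^DIM(complex))"
    by (rule lborel_affine) simp
  have "(\<integral>\<^sup>+z. ?g z \<partial>lborel) = (\<integral>\<^sup>+z. ?g z \<partial>density (distr lborel borel (\<lambda>x. 0 + sqrt 2 *\<^sub>R x)) (\<lambda>_. \<bar>sqrt 2\<bar>^DIM(complex)))"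
    by (rule arg_cong[where f="\<lambda>N. integral\<^sup>N N ?g", OF L])
  also have "\<dots> = (\<integral>\<^sup>+z. ennreal (\<bar>sqrt 2\<bar>^DIM(complex)) * ?g z \<partial>distr lborel borel (\<lambda>x. 0 + sqrt 2 *\<^sub>R x))"
    by (rule nn_integral_density) auto
  also have "\<dots> = (\<integral>\<^sup>+x. ennreal (\<bar>sqrt 2\<bar>^DIM(complex)) * ?g (0 + sqrt 2 *\<^sub>R x) \<partial>lborel)"
    by (rule nn_integral_distr) auto
  also have "\<dots> = (\<integral>\<^sup>+x. 2 * ennreal (exp (- (cmod x)\<^sup>2) / pi) \<partial>lborel)"
  proof (rule nn_integral_cong)
    fix x :: complex
    have "(cmod (sqrt 2 *\<^sub>R x))\<^sup>2 = 2 * (cmod x)\<^sup>2"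
      by (simp add: power_mult_distrib)
    then show "ennreal (\<bar>sqrt 2\<bar>^DIM(complex)) * ?g (0 + sqrt 2 *\<^sub>R x) = 2 * ennreal (exp (- (cmod x)\<^sup>2) / pi)"
      by simp
  qed
  also have "\<dots> = 2 * (\<integral>\<^sup>+x. ennreal (exp (- (cmod x)\<^sup>2) / pi) \<partial>lborel)"
    by (rule nn_integral_cmult) simp
  also have "\<dots> = 2" using gauss_total[OF P G] by simp
  finally show ?thesis .
qed

lemma gauss_tail:
  fixes M :: "'w measure" and X :: "'w \<Rightarrow> complex"
  assumes P: "prob_space M" and G: "std_complex_gaussian M X" and t: "t \<ge> 0"
  shows "measure M {\<omega>\<in>space M. t < cmod (X \<omega>)} \<le> 2 * exp (- t\<^sup>2 / 2)"
proof -
  interpret prob_space M by fact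
  let ?f = "\<lambda>z::complex. ennreal (exp (- (cmod z)\<^sup>2) / pi)"
  let ?g = "\<lambda>z::complex. ennreal (exp (- (cmod z)\<^sup>2 / 2) / pi)"
  let ?A = "{z::complex. t < cmod z}"
  have D: "distributed M lborel X ?f" using G unfolding std_complex_gaussian_def .
  have "emeasure M (X -` ?A \<inter> space M) = (\<integral>\<^sup>+z. ?f z * indicator ?A z \<partial>lborel)"
    by (rule distributed_emeasure[OF D]) simp
  also have "\<dots> \<le> (\<integral>\<^sup>+z. ennreal (exp (- t\<^sup>2 / 2)) * ?g z \<partial>lborel)"
  proof (rule nn_integral_mono)
    fix z :: complex
    show "?f z * indicator ?A z \<le> ennreal (exp (- t\<^sup>2 / 2)) * ?g z"
    proof (cases "z \<in> ?A")
      case True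
      then have "t\<^sup>2 \<le> (cmod z)\<^sup>2" using t by (simp add: power_mono)
      then have "exp (- (cmod z)\<^sup>2) \<le> exp (- t\<^sup>2 / 2) * exp (- (cmod z)\<^sup>2 / 2)"
        by (simp add: exp_add[symmetric])
      then have "exp (- (cmod z)\<^sup>2) / pi \<le> exp (- t\<^sup>2 / 2) * (exp (- (cmod z)\<^sup>2 / 2) / pi)"
        by (simp add: divide_right_mono)
      then show ?thesis using True by (simp add: ennreal_mult[symmetric] ennreal_leI)
    qed simp
  qed
  also have "\<dots> = ennreal (exp (- t\<^sup>2 / 2)) * (\<integral>\<^sup>+z. ?g z \<partial>lborel)"
    by (rule nn_integral_cmult) simp
  also have "\<dots> = ennreal (2 * exp (- t\<^sup>2 / 2))"
    using gauss_half_total[OF P G] by (simp add: ennreal_mult mult.commute)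
  finally have "ennreal (measure M {\<omega>\<in>space M. t < cmod (X \<omega>)}) \<le> ennreal (2 * exp (- t\<^sup>2 / 2))"
    by (simp add: emeasure_eq_measure vimage_def Int_def conj_commute)
  then show ?thesis by (simp add: ennreal_le_iff)
qed

lemma gauss_meas:
  assumes G: "std_complex_gaussian M X"
  shows "X \<in> borel_measurable M"
  using distributed_measurable[OF G[unfolded std_complex_gaussian_def]] by simp

lemma gauss_small:
  fixes M :: "'w measure" and X :: "'w \<Rightarrow> complex"
  assumes P: "prob_space M" and G: "std_complex_gaussian M X" and t: "0 < t" "t \<le> 1"
  shows "measure M {\<omega>\<in>space M. cmod (X \<omega>) \<le> t} \<ge> t\<^sup>2 / exp 1"
proof -
  interpret prob_space M by fact
  note [measurable] = gauss_meas[OF G]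
  have "t\<^sup>2 / exp 1 \<le> t\<^sup>2 * exp (-(cmod 0 + t)\<^sup>2)"
  proof -
    have "t\<^sup>2 \<le> 1" using t by (simp add: power_le_one)
    then have "exp (-1) \<le> exp (- t\<^sup>2)" by simp
    then show ?thesis using t by (simp add: exp_minus field_simps)
  qed
  also have "\<dots> \<le> measure M {\<omega>\<in>space M. X \<omega> \<in> ball 0 t}"
    by (rule gauss_ball[OF P G t(1)])
  also have "\<dots> \<le> measure M {\<omega>\<in>space M. cmod (X \<omega>) \<le> t}"
    by (rule finite_measure_mono) auto
  finally show ?thesis .
qed

lemma gauss_big:
  fixes M :: "'w measure" and X :: "'w \<Rightarrow> complex"
  assumes P: "prob_space M" and G: "std_complex_gaussian M X" and T: "0 \<le> T"
  shows "measure M {\<omega>\<in>space M. T \<le> cmod (X \<omega>)} \<ge> exp (-(T+1)\<^sup>2) / 4"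
proof -
  interpret prob_space M by fact
  note [measurable] = gauss_meas[OF G]
  let ?c = "complex_of_real (T + 1/2)"
  have cm: "cmod ?c = T + 1/2" by (subst norm_of_real) (use T in simp)
  have "exp (-(T+1)\<^sup>2) / 4 = (1/2)\<^sup>2 * exp (-(cmod ?c + 1/2)\<^sup>2)"
    unfolding cm by (simp add: power2_eq_square add.commute)
  also have "\<dots> \<le> measure M {\<omega>\<in>space M. X \<omega> \<in> ball ?c (1/2)}"
    by (rule gauss_ball[OF P G]) simp
  also have "\<dots> \<le> measure M {\<omega>\<in>space M. T \<le> cmod (X \<omega>)}"
  proof (rule finite_measure_mono)
    show "{\<omega>\<in>space M. X \<omega> \<in> ball ?c (1/2)} \<subseteq> {\<omega>\<in>space M. T \<le> cmod (X \<omega>)}"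
    proof safe
      fix \<omega> assume "\<omega> \<in> space M" "X \<omega> \<in> ball ?c (1/2)"
      then have "cmod (?c - X \<omega>) < 1/2" by (simp add: dist_norm)
      then have "\<bar>Re (?c - X \<omega>)\<bar> < 1/2" using abs_Re_le_cmod order_le_less_trans by blast
      then have "Re (?c - X \<omega>) < 1/2" using abs_less_iff by blast
      then have "T \<le> Re (X \<omega>)" by simp
      then show "T \<le> cmod (X \<omega>)" using complex_Re_le_cmod order_trans by blast
    qed
  qed auto
  finally show ?thesis .
qed

lemma gauss_cost_small:
  fixes M :: "'w measure" and X :: "'w \<Rightarrow> complex"
  assumes P: "prob_space M" and G: "std_complex_gaussian M X" and t: "0 < t" "t \<le> 1"
  shows "- ln (measure M {\<omega>\<in>space M. cmod (X \<omega>) \<le> t}) \<le> 2 * ln (1/t) + 1"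
proof -
  have p: "t\<^sup>2 / exp 1 \<le> measure M {\<omega>\<in>space M. cmod (X \<omega>) \<le> t}" by (rule gauss_small[OF P G t])
  have pos: "0 < t\<^sup>2 / exp 1" using t by simp
  have "ln (t\<^sup>2 / exp 1) \<le> ln (measure M {\<omega>\<in>space M. cmod (X \<omega>) \<le> t})"
    using p pos by simp
  moreover have "ln (t\<^sup>2 / exp 1) = - (2 * ln (1/t) + 1)"
    using t by (simp add: ln_div ln_mult power2_eq_square ln_inverse)
  ultimately show ?thesis by linarith
qed

lemma gauss_cost:
  fixes M :: "'w measure" and X :: "'w \<Rightarrow> complex"
  assumes P: "prob_space M" and G: "std_complex_gaussian M X" and t: "0 < t"
  shows "- ln (measure M {\<omega>\<in>space M. cmod (X \<omega>) \<le> t}) \<le> 16 * ln (1 + 1/t\<^sup>2)"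
proof -
  interpret prob_space M by fact
  note [measurable] = gauss_meas[OF G]
  define p where "p s = measure M {\<omega>\<in>space M. cmod (X \<omega>) \<le> s}" for s
  have mono: "p s \<le> p s'" if "s \<le> s'" for s s'
    unfolding p_def using that by (intro finite_measure_mono) auto
  have ln2: "ln (2::real) \<ge> 1/4"
  proof -
    have "(1/2::real) - (1/2)\<^sup>2 \<le> ln (1 + 1/2)" by (rule ln_one_plus_pos_lower_bound) auto
    moreover have "ln (1 + 1/2::real) \<le> ln 2" by simp
    ultimately have "(1/2::real) - (1/2)\<^sup>2 \<le> ln 2" by (rule order_trans)
    then show ?thesis by (simp add: power2_eq_square)
  qed
  have p1: "- ln (p 1) \<le> 1" using gauss_cost_small[OF P G, of 1] by (simp add: p_def)
  consider "t \<le> 1" | "1 \<le> t" "t \<le> 3" | "3 \<le> t" by linarith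
  then show ?thesis
  proof cases
    case 1
    have a: "- ln (p t) \<le> 2 * ln (1/t) + 1" using gauss_cost_small[OF P G t 1] by (simp add: p_def)
    have "2 * ln (1/t) = ln (1/t\<^sup>2)" using t by (simp add: ln_div power2_eq_square ln_mult)
    also have "\<dots> \<le> ln (1 + 1/t\<^sup>2)" using t by (intro ln_mono) auto
    finally have b: "2 * ln (1/t) \<le> ln (1 + 1/t\<^sup>2)" .
    have "ln 2 \<le> ln (1 + 1/t\<^sup>2)"
    proof -
      have "1 \<le> 1/t\<^sup>2" using t 1 by (simp add: power_le_one field_simps)
      then show ?thesis by simp
    qed
    with ln2 have "1 \<le> 15 * ln (1 + 1/t\<^sup>2)" by linarith
    with a b show ?thesis unfolding p_def by linarith
  next
    case 2
    have "- ln (p t) \<le> - ln (p 1)"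
    proof -
      have "1 / exp 1 \<le> p 1" using gauss_small[OF P G, of 1] by (simp add: p_def)
      moreover have "0 < 1 / exp (1::real)" by simp
      ultimately have "p 1 > 0" by linarith
      then show ?thesis using mono[of 1 t] 2 by simp
    qed
    also have "\<dots> \<le> 1" by (rule p1)
    also have "1 \<le> 16 * ln (1 + 1/t\<^sup>2)"
    proof -
      have "t*t \<le> 3*3" by (rule mult_mono) (use 2 in auto)
      moreover have "1*1 \<le> t*t" by (rule mult_mono) (use 2 in auto)
      ultimately have y: "1/9 \<le> 1/t\<^sup>2" "1/t\<^sup>2 \<le> 1" using t by (auto simp: field_simps power2_eq_square)
      have "(1/9::real) - (1/9)\<^sup>2 \<le> ln (1 + 1/9)" by (rule ln_one_plus_pos_lower_bound) auto
      also have "\<dots> \<le> ln (1 + 1/t\<^sup>2)" using y by simp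
      finally show ?thesis by (simp add: power2_eq_square)
    qed
    finally show ?thesis unfolding p_def .
  next
    case 3
    define q where "q = 2 * exp (- t\<^sup>2 / 2)"
    have tail: "measure M {\<omega>\<in>space M. t < cmod (X \<omega>)} \<le> q"
      unfolding q_def by (rule gauss_tail[OF P G]) (use t in simp)
    have "{\<omega>\<in>space M. cmod (X \<omega>) \<le> t} = space M - {\<omega>\<in>space M. t < cmod (X \<omega>)}" by auto
    then have "p t = 1 - measure M {\<omega>\<in>space M. t < cmod (X \<omega>)}"
      unfolding p_def by (simp add: prob_compl)
    then have pt: "1 - q \<le> p t" using tail by simp
    have "3*3 \<le> t*t" by (rule mult_mono) (use 3 in auto)
    then have tt: "9 \<le> t\<^sup>2" by (simp add: power2_eq_square)
    have e1: "1 + t\<^sup>2 / 2 \<le> exp (t\<^sup>2 / 2)" by (rule exp_ge_add_one_self)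
    have q0: "0 \<le> q" unfolding q_def by simp
    have qle: "q \<le> 4 / t\<^sup>2"
    proof -
      have "exp (- t\<^sup>2 / 2) = 1 / exp (t\<^sup>2 / 2)" by (simp add: exp_minus field_simps)
      also have "\<dots> \<le> 1 / (1 + t\<^sup>2 / 2)" using e1 by (intro divide_left_mono) (auto simp: add_pos_nonneg)
      also have "\<dots> = 2 / (2 + t\<^sup>2)" by (simp add: field_simps)
      also have "\<dots> \<le> 2 / t\<^sup>2" using tt by (intro divide_left_mono) (auto intro!: mult_pos_pos)
      finally show ?thesis unfolding q_def by simp
    qed
    have "4 / t\<^sup>2 \<le> 4 / 9" using tt by (intro divide_left_mono) auto
    then have qh: "q \<le> 1/2" using qle by linarith
    have "- q - 2 * q\<^sup>2 \<le> ln (1 - q)" by (rule ln_one_minus_pos_lower_bound[OF q0 qh])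
    moreover have "ln (1 - q) \<le> ln (p t)" using pt qh by simp
    moreover have "2 * q\<^sup>2 \<le> q"
    proof -
      have "q * q \<le> q * (1/2)" by (rule mult_left_mono) (use q0 qh in auto)
      then show ?thesis by (simp add: power2_eq_square)
    qed
    ultimately have a: "- ln (p t) \<le> 2 * q" by linarith
    have y1: "1/t\<^sup>2 \<le> 1/9" using tt by (intro divide_left_mono) auto
    have y: "1/t\<^sup>2 \<le> 1/9" "0 \<le> 1/t\<^sup>2" using y1 by auto
    have "1/t\<^sup>2 - (1/t\<^sup>2)\<^sup>2 \<le> ln (1 + 1/t\<^sup>2)" by (rule ln_one_plus_pos_lower_bound) (use y in auto)
    moreover have "(1/t\<^sup>2)\<^sup>2 \<le> (1/t\<^sup>2) / 2"
    proof -
      have "(1/t\<^sup>2) * (1/t\<^sup>2) \<le> (1/t\<^sup>2) * (1/2)" by (rule mult_left_mono) (use y in auto)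
      then show ?thesis by (simp add: power2_eq_square)
    qed
    ultimately have "1/t\<^sup>2 / 2 \<le> ln (1 + 1/t\<^sup>2)" by linarith
    then have "8 / t\<^sup>2 \<le> 16 * ln (1 + 1/t\<^sup>2)" by simp
    with a qle show ?thesis unfolding p_def by linarith
  qed
qed



lemma ln_pos_iff: "0 \<le> (x::real) \<Longrightarrow> 0 < ln x \<longleftrightarrow> 1 < x"
  by (cases "x = 0") auto

lemma Nset_eq: "r \<ge> 0 \<Longrightarrow> Nset a r = {n. 1 < cmod (a n) * r ^ n}"
  unfolding Nset_def by (subst ln_pos_iff) auto

lemma Nset_mem: "r \<ge> 0 \<Longrightarrow> n \<in> Nset a r \<longleftrightarrow> 1 < cmod (a n) * r ^ n"
  by (simp add: Nset_eq)

lemma Nset_mono: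
  assumes "0 \<le> r" "r \<le> r'" shows "Nset a r \<subseteq> Nset a r'"
proof -
  have le: "cmod (a n) * r ^ n \<le> cmod (a n) * r' ^ n" for n
    using assms by (intro mult_left_mono power_mono) auto
  show ?thesis using assms by (auto simp: Nset_mem intro: less_le_trans[OF _ le])
qed

lemma Nset_finite:
  assumes L: "limsup (\<lambda>n. ereal (root n (cmod (a n)))) = 0" and r: "r > 0"
  shows "finite (Nset a r)"
proof -
  have "limsup (\<lambda>n. ereal (root n (cmod (a n)))) < ereal (1/r)" using L r by simp
  then have "eventually (\<lambda>n. ereal (root n (cmod (a n))) < ereal (1/r)) sequentially"
    by (rule Limsup_lessD)
  then obtain n0 where n0: "\<And>n. n \<ge> n0 \<Longrightarrow> root n (cmod (a n)) < 1/r"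
    by (auto simp: eventually_sequentially)
  have "Nset a r \<subseteq> {..<Suc n0}"
  proof
    fix n assume n: "n \<in> Nset a r"
    show "n \<in> {..<Suc n0}"
    proof (rule ccontr)
      assume "n \<notin> {..<Suc n0}"
      then have nn: "n \<ge> n0" "n > 0" by auto
      have rt: "root n (cmod (a n)) < 1/r" using n0[OF nn(1)] .
      have "cmod (a n) = root n (cmod (a n)) ^ n" using nn(2) by (simp add: real_root_pow_pos2)
      also have "\<dots> \<le> (1/r) ^ n" using rt nn(2) by (intro power_mono) (auto simp: real_root_ge_zero)
      finally have "cmod (a n) * r ^ n \<le> (1/r)^n * r^n" using r by (intro mult_right_mono) auto
      also have "\<dots> = 1" using r by (simp add: power_mult_distrib[symmetric])
      finally show False using n r by (auto simp: Nset_mem)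
    qed
  qed
  then show ?thesis by (rule finite_subset) simp
qed

lemma NN_mono:
  assumes L: "limsup (\<lambda>n. ereal (root n (cmod (a n)))) = 0" and "0 < r" "r \<le> r'"
  shows "NN a r \<le> NN a r'"
  unfolding NN_def using assms by (intro card_mono Nset_finite Nset_mono) auto

lemma NN_unbounded:
  assumes I: "infinite {n. a n \<noteq> 0}"
  shows "\<exists>r>1. K \<le> NN a r \<or> infinite (Nset a r)"
proof -
  have "infinite ({n. a n \<noteq> 0} - {0})" using I by simp
  then obtain B where B: "B \<subseteq> {n. a n \<noteq> 0} - {0}" "finite B" "card B = K"
    using infinite_arbitrarily_large by blast
  define r where "r = 2 + (\<Sum>n\<in>B. 1 / cmod (a n))"
  have r1: "r > 1" unfolding r_def by (smt (verit) sum_nonneg divide_nonneg_nonneg norm_ge_zero)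
  have "B \<subseteq> Nset a r"
  proof
    fix n assume n: "n \<in> B"
    then have an: "cmod (a n) > 0" "n \<ge> 1" using B by auto
    have "1 / cmod (a n) \<le> (\<Sum>n\<in>B. 1 / cmod (a n))"
      using n B(2) by (intro member_le_sum) auto
    then have "1 / cmod (a n) < r" unfolding r_def by linarith
    then have "1 < cmod (a n) * r" using an by (simp add: field_simps)
    also have "r = r ^ 1" by simp
    also have "cmod (a n) * r ^ 1 \<le> cmod (a n) * r ^ n"
      using an r1 by (intro mult_left_mono power_increasing) auto
    finally show "n \<in> Nset a r" using r1 by (auto simp: Nset_mem)
  qed
  then have "infinite (Nset a r) \<or> K \<le> NN a r"
    using B unfolding NN_def by (metis card_mono)
  then show ?thesis using r1 by blast
qed



lemma ennreal_le_suminf: "(f k :: ennreal) \<le> suminf f"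
proof (rule ccontr)
  assume "\<not> f k \<le> suminf f"
  then have "suminf f < f k" by simp
  then show False using ennreal_suminf_lessD[of f "f k" k] by simp
qed

lemma exc_set:
  fixes Nf :: "real \<Rightarrow> nat" and N0 :: nat
  assumes mono: "\<And>x y. 1 \<le> x \<Longrightarrow> x \<le> y \<Longrightarrow> Nf x \<le> Nf y"
    and unb: "\<And>K. \<exists>r\<ge>1. K \<le> Nf r"
    and N0: "N0 \<ge> 2"
  shows "\<exists>E. E \<subseteq> {1<..} \<and> finite_log_measure E \<and>
     (\<forall>r\<in>{1<..}-E. N0 \<le> Nf r \<and> (\<exists>h. 0 < h \<and> h \<le> 1/2 \<and> 1/h \<le> real (Nf r) \<and> Nf (r/(1-h)) \<le> 4 * Nf r))"
proof -
  obtain R where R: "R \<ge> 1" "N0 \<le> Nf R" using unb by blast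
  define R0 where "R0 = R + 1"
  define S where "S j = {\<rho>::real. 1 \<le> \<rho> \<and> 2^j \<le> Nf \<rho>}" for j :: nat
  define \<beta> where "\<beta> j = Inf (S j)" for j
  have Sne: "S j \<noteq> {}" for j using unb[of "2^j"] unfolding S_def by auto
  have Sbdd: "bdd_below (S j)" for j unfolding S_def by (rule bdd_belowI[of _ 1]) auto
  have \<beta>1: "1 \<le> \<beta> j" for j unfolding \<beta>_def using Sne by (intro cInf_greatest) (auto simp: S_def)
  define J where "J k = {\<beta> (k+3) * (1 - 1/2^(k+1)) .. \<beta> (k+3)}" for k :: nat
  define E where "E = {1<..R0} \<union> (\<Union>k. J k \<inter> {1<..})"
  have Esub: "E \<subseteq> {1<..}" unfolding E_def by auto
  have Emeas: "E \<in> sets lborel" unfolding E_def J_def by auto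
  have pw: "indicator E r / ennreal r \<le> indicator {1<..R0} r + (\<Sum>k. ennreal (2/\<beta>(k+3)) * indicator (J k) r)" for r :: real
  proof (cases "r \<in> E")
    case False then show ?thesis by simp
  next
    case True
    then have r1: "r > 1" using Esub by auto
    have eq: "indicator E r / ennreal r = ennreal (1/r)" using True r1 divide_ennreal[of 1 r] by simp
    show ?thesis
    proof (cases "r \<in> {1<..R0}")
      case True
      have "ennreal (1/r) \<le> 1" using r1 by simp
      also have "1 = indicator {1<..R0} r" using True by simp
      finally show ?thesis unfolding eq by (rule add_increasing2[rotated]) simp
    next
      case False
      then obtain k where k: "r \<in> J k" using \<open>r \<in> E\<close> unfolding E_def by auto
      have hk: "1 - 1/2^(k+1) \<ge> (1/2::real)"
      proof -
        have "(1/2::real)^(k+1) \<le> (1/2)^1" by (rule power_decreasing) auto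
        then show ?thesis by (simp add: power_one_over)
      qed
      have "\<beta>(k+3) / 2 \<le> \<beta> (k+3) * (1 - 1/2^(k+1))" using hk \<beta>1[of "k+3"] by simp
      also have "\<dots> \<le> r" using k unfolding J_def by simp
      finally have "1/r \<le> 2/\<beta>(k+3)" using \<beta>1[of "k+3"] r1 by (simp add: field_simps)
      then have "ennreal (1/r) \<le> ennreal (2/\<beta>(k+3)) * indicator (J k) r" using k by (simp add: ennreal_leI)
      also have "\<dots> \<le> (\<Sum>k. ennreal (2/\<beta>(k+3)) * indicator (J k) r)" by (rule ennreal_le_suminf)
      finally have X: "ennreal (1/r) \<le> (\<Sum>k. ennreal (2/\<beta>(k+3)) * indicator (J k) r)" .
      show ?thesis unfolding eq by (rule add_increasing[OF _ X]) simp
    qed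
  qed
  have "(\<integral>\<^sup>+ r. indicator E r / ennreal r \<partial>lborel) \<le>
        (\<integral>\<^sup>+ r. indicator {1<..R0} r + (\<Sum>k. ennreal (2/\<beta>(k+3)) * indicator (J k) r) \<partial>lborel)"
    by (rule nn_integral_mono) (rule pw)
  also have "\<dots> = (\<integral>\<^sup>+ r. indicator {1<..R0} r \<partial>lborel) + (\<integral>\<^sup>+ r. (\<Sum>k. ennreal (2/\<beta>(k+3)) * indicator (J k) r) \<partial>lborel)"
    by (rule nn_integral_add) (auto simp: J_def)
  also have "(\<integral>\<^sup>+ r. (\<Sum>k. ennreal (2/\<beta>(k+3)) * indicator (J k) r) \<partial>lborel) =
      (\<Sum>k. (\<integral>\<^sup>+ r. ennreal (2/\<beta>(k+3)) * indicator (J k) r \<partial>lborel))"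
    by (rule nn_integral_suminf) (auto simp: J_def)
  also have "\<dots> = (\<Sum>k. ennreal ((1/2)^k))"
  proof (rule suminf_cong)
    fix k
    have b: "\<beta>(k+3) * (1 - 1/2^(k+1)) \<le> \<beta>(k+3)" using \<beta>1[of "k+3"] by simp
    have "(\<integral>\<^sup>+ r. ennreal (2/\<beta>(k+3)) * indicator (J k) r \<partial>lborel) = ennreal (2/\<beta>(k+3)) * emeasure lborel (J k)"
      by (rule nn_integral_cmult_indicator) (simp add: J_def)
    also have "emeasure lborel (J k) = ennreal (\<beta>(k+3) / 2^(k+1))"
      unfolding J_def using b by (simp add: algebra_simps)
    also have "ennreal (2/\<beta>(k+3)) * ennreal (\<beta>(k+3) / 2^(k+1)) = ennreal ((1/2)^k)"
      using \<beta>1[of "k+3"] by (simp add: ennreal_mult[symmetric] power_one_over field_simps)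
    finally show "(\<integral>\<^sup>+ r. ennreal (2/\<beta>(k+3)) * indicator (J k) r \<partial>lborel) = ennreal ((1/2)^k)" .
  qed
  also have "(\<integral>\<^sup>+ r. indicator {1<..R0} r \<partial>lborel) = ennreal (R0 - 1)"
    using R unfolding R0_def by simp
  finally have int: "(\<integral>\<^sup>+ r. indicator E r / ennreal r \<partial>lborel) \<le> ennreal (R0 - 1) + (\<Sum>k. ennreal ((1/2)^k))" .
  have "(\<Sum>k. ennreal ((1/2::real)^k)) \<noteq> top" by (rule ennreal_suminf_neq_top) auto
  then have "ennreal (R0 - 1) + (\<Sum>k. ennreal ((1/2)^k)) < top" by (simp add: top.not_eq_extremum)
  from le_less_trans[OF int this] have fl: "finite_log_measure E" unfolding finite_log_measure_def using Emeas by simp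
  have main: "N0 \<le> Nf r \<and> (\<exists>h. 0 < h \<and> h \<le> 1/2 \<and> 1/h \<le> real (Nf r) \<and> Nf (r/(1-h)) \<le> 4 * Nf r)"
    if r: "r \<in> {1<..} - E" for r
  proof -
    have r1: "r > 1" "r \<notin> E" using r by auto
    then have rR: "r > R0" unfolding E_def by auto
    have NR: "N0 \<le> Nf r" using R mono[of R r] rR unfolding R0_def by auto
    then have "1 \<le> Nf r" using N0 by simp
    then obtain n where n: "2^n \<le> Nf r" "Nf r < 2^(n+1)" using ex_power_ivl1[of 2 "Nf r"] by auto
    have n1: "n \<ge> 1"
    proof (rule ccontr)
      assume "\<not> n \<ge> 1" then have "n = 0" by simp
      with n NR N0 show False by simp
    qed
    define k where "k = n - 1"
    have kn: "k + 1 = n" "k + 3 = n + 2" using n1 unfolding k_def by auto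
    define h :: real where "h = 1/2^n"
    have h0: "0 < h" unfolding h_def by simp
    have hh: "h \<le> 1/2"
    proof -
      have "(1/2::real)^n \<le> (1/2)^1" using n1 by (intro power_decreasing) auto
      then show ?thesis unfolding h_def by (simp add: power_one_over)
    qed
    have hN: "1/h \<le> real (Nf r)" unfolding h_def using n(1) by (simp add: of_nat_le_iff[symmetric])
    have lt: "Nf (r/(1-h)) < 2^(n+2)"
    proof (rule ccontr)
      assume A: "\<not> Nf (r/(1-h)) < 2^(n+2)"
      have r'r: "r \<le> r/(1-h)" using r1 h0 hh by (simp add: field_simps)
      have inS: "r/(1-h) \<in> S (n+2)" unfolding S_def using A r1 r'r by auto
      have b1: "\<beta> (n+2) \<le> r/(1-h)" unfolding \<beta>_def using inS Sbdd by (rule cInf_lower)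
      have b2: "r \<le> \<beta> (n+2)"
      proof (rule ccontr)
        assume "\<not> r \<le> \<beta> (n+2)"
        then have "Inf (S (n+2)) < r" unfolding \<beta>_def by simp
        then obtain \<rho> where \<rho>: "\<rho> \<in> S (n+2)" "\<rho> < r" using cInf_less_iff[OF Sne Sbdd] by auto
        then have "2^(n+2) \<le> Nf \<rho>" "1 \<le> \<rho>" unfolding S_def by auto
        moreover have "Nf \<rho> \<le> Nf r" using mono[of \<rho> r] \<rho> \<open>1 \<le> \<rho>\<close> by auto
        ultimately have "2^(n+2) \<le> Nf r" by linarith
        moreover have "(2::nat)^(n+1) \<le> 2^(n+2)" by (rule power_increasing) auto
        ultimately show False using n(2) by linarith
      qed
      have bb: "\<beta>(n+2) * (1-h) \<le> r" using b1 h0 hh by (simp add: field_simps)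
      have e1: "\<beta> (k+3) = \<beta> (n+2)" using kn(2) by (rule arg_cong)
      have e2: "1/2^(k+1) = h" using kn h_def by simp
      have "r \<in> J k" unfolding J_def e2 e1 using b2 bb by auto
      then have "r \<in> E" unfolding E_def using r1 by auto
      with r1 show False by simp
    qed
    have "Nf (r/(1-h)) \<le> 4 * Nf r"
    proof -
      have "(2::nat)^(n+2) = 4 * 2^n" by (simp add: power_add)
      then show ?thesis using lt n(1) by linarith
    qed
    with NR h0 hh hN show ?thesis by blast
  qed
  show ?thesis using Esub fl main by blast
qed



lemma ln_powr_trick:
  fixes y p :: real
  assumes y: "0 \<le> y" and p: "0 < p" "p \<le> 1"
  shows "ln (1 + y) \<le> y powr p / p"
proof (cases "y = 0")
  case True then show ?thesis by simp
next
  case False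
  with y have y0: "y > 0" by simp
  have a: "(1+y) powr (p-1) \<le> 1"
    using powr_mono2'[of "p-1" 1 "1+y"] p y by simp
  have b: "(1+y) powr (p-1) \<le> y powr (p-1)"
    using powr_mono2'[of "p-1" y "1+y"] p y0 by simp
  have "(1+y) powr p = (1+y) powr ((p-1) + 1)" by simp
  also have "\<dots> = (1+y) powr (p-1) * (1+y) powr 1" by (rule powr_add)
  also have "(1+y) powr 1 = 1+y" using y by simp
  finally have "(1+y) powr p = (1+y) powr (p-1) * (1+y)" .
  also have "\<dots> = (1+y) powr (p-1) + y * (1+y) powr (p-1)" by (simp add: algebra_simps)
  also have "\<dots> \<le> 1 + y * y powr (p-1)"
    using a b y0 by (intro add_mono mult_left_mono) auto
  also have "y * y powr (p-1) = y powr 1 * y powr (p-1)" using y0 by simp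
  also have "\<dots> = y powr (1 + (p-1))" by (rule powr_add[symmetric])
  also have "\<dots> = y powr p" by simp
  finally have c: "(1+y) powr p \<le> 1 + y powr p" .
  have "ln (1+y) = ln ((1+y) powr p) / p" using p y by (simp add: ln_powr)
  also have "ln ((1+y) powr p) \<le> ln (1 + y powr p)" using c y by (intro ln_mono) auto
  also have "ln (1 + y powr p) \<le> y powr p" by (rule ln_add_one_self_le_self) simp
  finally show ?thesis using p by (simp add: divide_right_mono)
qed

lemma geo_bound:
  fixes y :: real assumes y: "0 < y"
  shows "1 / (1 - exp (-y)) \<le> 1 + 1/y"
proof -
  have "1 + y \<le> exp y" by (rule exp_ge_add_one_self)
  then have e: "exp (-y) \<le> 1 / (1 + y)" using y by (simp add: exp_minus field_simps)
  then have "y / (1 + y) \<le> 1 - exp (-y)" using y by (simp add: field_simps)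
  moreover have "0 < y / (1 + y)" using y by simp
  ultimately have pp: "0 < (1 - exp (-y)) * (y / (1 + y))" using y by (intro mult_pos_pos) auto
  have "1 / (1 - exp (-y)) \<le> 1 / (y / (1 + y))"
    by (rule divide_left_mono) (use \<open>y / (1 + y) \<le> 1 - exp (-y)\<close> pp in auto)
  also have "\<dots> = 1 + 1/y" using y by (simp add: field_simps)
  finally show ?thesis .
qed



lemma asymp_bound:
  fixes C0 \<epsilon> :: real assumes eps: "\<epsilon> > 0"
  shows "\<exists>X. \<forall>x\<ge>X. C0 + 4 * x * (2 * ln (7 * x) + 1) + 32 * exp 2 * x * (ln (7 * x))\<^sup>2
                   \<le> x * exp ((2 + \<epsilon>) * sqrt (ln x))"
proof -
  have l1: "((\<lambda>x::real. (4 * (2 * ln (7 * x) + 1) + 32 * exp 2 * (ln (7 * x))\<^sup>2) / exp (2 * sqrt (ln x))) \<longlongrightarrow> 0) at_top"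
    by real_asymp
  have l2: "filterlim (\<lambda>x::real. x * exp (2 * sqrt (ln x))) at_top at_top"
    by real_asymp
  have e1: "eventually (\<lambda>x. (4 * (2 * ln (7 * x) + 1) + 32 * exp 2 * (ln (7 * x))\<^sup>2) / exp (2 * sqrt (ln x)) < 1/2) at_top"
    using l1 by (rule order_tendstoD) simp
  have e2: "eventually (\<lambda>x. 2 * C0 \<le> x * exp (2 * sqrt (ln x))) at_top"
    using l2 by (simp add: filterlim_at_top)
  have e3: "eventually (\<lambda>x::real. 1 \<le> x) at_top" by (rule eventually_ge_at_top)
  have "eventually (\<lambda>x. C0 + 4 * x * (2 * ln (7 * x) + 1) + 32 * exp 2 * x * (ln (7 * x))\<^sup>2
                   \<le> x * exp ((2 + \<epsilon>) * sqrt (ln x))) at_top"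
    using e1 e2 e3
  proof eventually_elim
    case (elim x)
    define E where "E = exp (2 * sqrt (ln x))"
    define Q where "Q = 4 * (2 * ln (7 * x) + 1) + 32 * exp 2 * (ln (7 * x))\<^sup>2"
    have E0: "0 < E" unfolding E_def by simp
    have "Q < E / 2" using elim(1) E0 unfolding Q_def E_def by (simp add: field_simps)
    then have "x * Q \<le> x * (E / 2)" using elim(3) by (intro mult_left_mono) auto
    moreover have "C0 \<le> x * E / 2" using elim(2) unfolding E_def by simp
    moreover have "E \<le> exp ((2 + \<epsilon>) * sqrt (ln x))"
      unfolding E_def using eps elim(3) by (auto intro!: mult_right_mono)
    then have "x * E \<le> x * exp ((2 + \<epsilon>) * sqrt (ln x))" using elim(3) by (intro mult_left_mono) auto
    ultimately show ?case unfolding Q_def by (simp add: algebra_simps)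
  qed
  then show ?thesis by (simp add: eventually_at_top_linorder)
qed



lemma core:
  fixes M :: "'w measure" and \<xi> :: "nat \<Rightarrow> 'w \<Rightarrow> complex" and a :: "nat \<Rightarrow> complex"
  assumes P: "prob_space M"
    and I: "prob_space.indep_vars M (\<lambda>_. borel) \<xi> UNIV"
    and G: "\<And>n. std_complex_gaussian M (\<xi> n)"
    and a0: "a 0 \<noteq> 0"
    and r: "r > 0" and h: "0 < h" "h \<le> 1/2"
    and N1: "1 \<le> real (NN a r)" and hN: "1/h \<le> real (NN a r)"
    and fin: "finite (Nset a (r/(1-h)))" and fin0: "finite (Nset a r)"
    and card: "real (card (Nset a (r/(1-h)))) \<le> 4 * real (NN a r)"
  shows "p0 M a \<xi> r \<le> ss a r + ((2/cmod (a 0) + 1)\<^sup>2 + ln 4)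
           + 4 * real (NN a r) * (2 * ln (7 * real (NN a r)) + 1)
           + 32 * exp 2 * real (NN a r) * (ln (7 * real (NN a r)))\<^sup>2"
proof -
  interpret prob_space M by fact
  define N where "N = real (NN a r)"
  define \<delta> where "\<delta> = 1 / (7 * N)"
  define r' where "r' = r / (1 - h)"
  define S1 where "S1 = Nset a r'"
  define c where "c n = cmod (a n) * r ^ n" for n
  define T where "T = 2 / cmod (a 0)"
  define t where "t n = (if n \<in> S1 then \<delta> / max (c n) \<delta> else \<delta> * exp (real n * h / 2))" for n
  define Sset where "Sset n = (if n = 0 then {z::complex. T \<le> cmod z} else {z. cmod z \<le> t n})" for n
  define A where "A n = \<xi> n -` Sset n \<inter> space M" for n
  define pos where "pos n = (if n \<in> Nset a r then ln (c n) else 0)" for n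
  define L where "L = ln (7 * N)"
  define p where "p = 1 / L"
  define q where "q = exp (- (h / 2))"
  define v where "v n = (if n \<in> S1 then \<delta> else 0) + \<delta> * q ^ n" for n
  define U where "U = ss a r + ((T + 1)\<^sup>2 + ln 4) + 4 * N * (2 * L + 1) + 32 * exp 2 * N * L\<^sup>2"
  note [measurable] = gauss_meas[OF G]
  have N1': "1 \<le> N" using N1 unfolding N_def .
  have \<delta>0: "0 < \<delta>" unfolding \<delta>_def using N1' by simp
  have \<delta>1: "\<delta> \<le> 1" unfolding \<delta>_def using N1' by (simp add: field_simps)
  have L1: "1 \<le> L"
  proof -
    have "exp 1 \<le> 7 * N" using exp_le N1' by linarith
    then have "ln (exp 1) \<le> ln (7 * N)" using N1' by (intro ln_mono) auto
    then show ?thesis unfolding L_def by simp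
  qed
  have \<delta>L: "ln (1/\<delta>) = L" unfolding \<delta>_def L_def by simp
  have r'0: "r' > 0" unfolding r'_def using r h by simp
  have S1fin: "finite S1" unfolding S1_def r'_def using fin .
  have cnn: "0 \<le> c n" for n unfolding c_def using r by simp
  have decay: "c n \<le> exp (- (real n * h))" if "n \<notin> S1" for n
  proof -
    have "cmod (a n) * r' ^ n \<le> 1" using that r'0 unfolding S1_def by (simp add: Nset_mem not_less)
    have rr: "r = r' * (1 - h)" unfolding r'_def using h by simp
    have "c n = (cmod (a n) * r' ^ n) * (1 - h) ^ n" unfolding c_def rr by (simp add: power_mult_distrib)
    also have "\<dots> \<le> 1 * (1 - h) ^ n"
      using \<open>cmod (a n) * r' ^ n \<le> 1\<close> h by (intro mult_right_mono) auto
    also have "(1 - h) ^ n \<le> exp (-h) ^ n"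
      using h exp_ge_add_one_self[of "-h"] by (intro power_mono) auto
    also have "exp (-h) ^ n = exp (- (real n * h))" by (simp add: exp_of_nat_mult[symmetric])
    finally show ?thesis by simp
  qed
  have t0: "0 < t n" for n unfolding t_def using \<delta>0 by auto
  have tS1: "t n \<le> 1" "t n * c n \<le> \<delta>" if "n \<in> S1" for n
  proof -
    have m: "0 < max (c n) \<delta>" using \<delta>0 by simp
    show "t n \<le> 1" unfolding t_def using that m by (simp add: field_simps)
    have "\<delta> * c n \<le> \<delta> * max (c n) \<delta>" using \<delta>0 by (intro mult_left_mono) auto
    then show "t n * c n \<le> \<delta>" unfolding t_def using that m by (simp add: field_simps)
  qed
  have tS2: "t n * c n \<le> \<delta> * q ^ n" if "n \<notin> S1" for n
  proof -
    have tn: "t n = \<delta> * exp (real n * h / 2)" using that by (simp add: t_def)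
    have "t n * c n \<le> \<delta> * exp (real n * h / 2) * exp (- (real n * h))"
      unfolding tn using decay[OF that] \<delta>0 by (intro mult_left_mono) auto
    also have "\<dots> = \<delta> * exp (- (real n * h / 2))" by (simp add: mult.assoc exp_add[symmetric])
    also have "exp (- (real n * h / 2)) = q ^ n" unfolding q_def by (simp add: exp_of_nat_mult[symmetric])
    finally show ?thesis .
  qed
  have q01: "0 < q" "q < 1" unfolding q_def using h by auto
  have tc_v: "t n * c n \<le> v n" for n
  proof (cases "n \<in> S1")
    case True
    have "0 \<le> \<delta> * q ^ n" using \<delta>0 q01 by simp
    then show ?thesis using tS1(2)[OF True] unfolding v_def using True by simp
  next
    case False
    then show ?thesis using tS2[OF False] unfolding v_def by simp
  qed
  have v0: "0 \<le> v n" for n unfolding v_def using \<delta>0 q01 by simp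
  define f1 where "f1 n = (if n \<in> S1 then \<delta> else 0)" for n
  define f2 where "f2 n = \<delta> * q ^ n" for n
  have vf: "v = (\<lambda>n. f1 n + f2 n)" unfolding v_def f1_def f2_def by auto
  have s1: "summable f1" using S1fin by (rule summable_finite) (simp add: f1_def)
  have s1v: "suminf f1 = real (card S1) * \<delta>"
  proof -
    have "suminf f1 = sum f1 S1" using S1fin by (rule suminf_finite) (simp add: f1_def)
    also have "\<dots> = real (card S1) * \<delta>" unfolding f1_def by simp
    finally show ?thesis .
  qed
  have s2: "summable f2" unfolding f2_def using q01 by (intro summable_mult summable_geometric) simp
  have s2v: "suminf f2 = \<delta> * (1 / (1 - q))"
    unfolding f2_def using q01 by (simp add: suminf_mult suminf_geometric)
  have sumv1: "summable v" unfolding vf using s1 s2 by (rule summable_add)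
  have "suminf v = suminf f1 + suminf f2" unfolding vf using s1 s2 by (rule suminf_add[symmetric])
  also have "\<dots> \<le> 4 * N * \<delta> + \<delta> * (1 + 2 * N)"
  proof (rule add_mono)
    show "suminf f1 \<le> 4 * N * \<delta>" unfolding s1v using card \<delta>0
      unfolding S1_def r'_def N_def by (intro mult_right_mono) auto
    have "1 / (1 - q) \<le> 1 + 1 / (h/2)" unfolding q_def using h by (intro geo_bound) simp
    also have "1 / (h/2) = 2 * (1/h)" by simp
    also have "\<dots> \<le> 2 * N" using hN unfolding N_def by simp
    finally show "suminf f2 \<le> \<delta> * (1 + 2 * N)" unfolding s2v using \<delta>0 by (intro mult_left_mono) auto
  qed
  also have "\<dots> \<le> 1" unfolding \<delta>_def using N1' by (simp add: field_simps)
  finally have sumv2: "suminf v \<le> 1" .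
  have T0: "0 \<le> T" unfolding T_def by simp
  have A0eq: "A 0 = {\<omega>\<in>space M. T \<le> cmod (\<xi> 0 \<omega>)}" unfolding A_def Sset_def by auto
  have ASeq: "A n = {\<omega>\<in>space M. cmod (\<xi> n \<omega>) \<le> t n}" if "n \<noteq> 0" for n
    unfolding A_def Sset_def using that by auto
  have nonzero: "gaf a \<xi> \<omega> z \<noteq> 0" if \<omega>: "\<omega> \<in> (\<Inter>n. A n)" and z: "cmod z < r" for \<omega> z
  proof -
    define u where "u n = \<xi> n \<omega> * a n * z ^ n" for n
    have A\<omega>: "\<omega> \<in> A n" for n using \<omega> by auto
    have bnd: "norm (u (Suc n)) \<le> v (Suc n)" for n
    proof -
      have x: "cmod (\<xi> (Suc n) \<omega>) \<le> t (Suc n)" using A\<omega>[of "Suc n"] ASeq[of "Suc n"] by simp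
      have y: "cmod z ^ Suc n \<le> r ^ Suc n" using z by (intro power_mono) auto
      have "norm (u (Suc n)) = cmod (\<xi> (Suc n) \<omega>) * (cmod (a (Suc n)) * cmod z ^ Suc n)"
        unfolding u_def by (simp add: norm_mult norm_power)
      also have "\<dots> \<le> t (Suc n) * (cmod (a (Suc n)) * r ^ Suc n)"
        using x y t0[of "Suc n"] by (intro mult_mono mult_left_mono) auto
      also have "\<dots> = t (Suc n) * c (Suc n)" unfolding c_def ..
      also have "\<dots> \<le> v (Suc n)" by (rule tc_v)
      finally show ?thesis .
    qed
    have sv: "summable (\<lambda>n. v (Suc n))" using sumv1 by (simp add: summable_Suc_iff)
    have su: "summable (\<lambda>n. u (Suc n))"
      by (rule summable_comparison_test[OF _ sv]) (use bnd in auto)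
    have su': "summable u" using su by (simp add: summable_Suc_iff)
    have "norm (\<Sum>n. u (Suc n)) \<le> (\<Sum>n. v (Suc n))" by (rule norm_suminf_le[OF bnd sv])
    also have "\<dots> = suminf v - v 0" using sumv1 by (rule suminf_split_head)
    also have "\<dots> \<le> 1" using sumv2 v0[of 0] by linarith
    finally have rest: "norm (\<Sum>n. u (Suc n)) \<le> 1" .
    have "T \<le> cmod (\<xi> 0 \<omega>)" using A\<omega>[of 0] A0eq by simp
    then have "T * cmod (a 0) \<le> cmod (\<xi> 0 \<omega>) * cmod (a 0)" by (intro mult_right_mono) auto
    moreover have "T * cmod (a 0) = 2" unfolding T_def using a0 by simp
    ultimately have u0: "2 \<le> cmod (u 0)" unfolding u_def by (simp add: norm_mult)
    have split: "u 0 = suminf u - (\<Sum>n. u (Suc n))" using suminf_split_head[OF su'] by simp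
    have "cmod (u 0) \<le> cmod (suminf u) + cmod (\<Sum>n. u (Suc n))"
      unfolding split by (rule norm_triangle_ineq4)
    with u0 rest have "1 \<le> cmod (suminf u)" by linarith
    moreover have "gaf a \<xi> \<omega> z = suminf u" unfolding gaf_def u_def ..
    ultimately show ?thesis by auto
  qed
  define pr where "pr n = measure M (A n)" for n
  define C0 where "C0 = (T + 1)\<^sup>2 + ln 4"
  define q' where "q' = exp (- (h * p))"
  define w where "w n = (if n = 0 then C0 else 0) + (if n \<in> S1 then 2 * pos n + 2 * L + 1 else 0)
                        + 16 * exp 2 * q' ^ n / p" for n
  have p0: "0 < p" "p \<le> 1" unfolding p_def using L1 by auto
  have q'01: "0 < q'" "q' < 1" unfolding q'_def using h p0 by auto
  have pos0: "0 \<le> pos n" for n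
  proof (cases "n \<in> Nset a r")
    case True then show ?thesis unfolding pos_def c_def Nset_def by simp
  qed (simp add: pos_def)
  have prpos: "0 < pr n" and cost: "- ln (pr n) \<le> w n" for n
  proof -
    have wge: "0 \<le> 16 * exp 2 * q' ^ n / p" using q'01 p0 by simp
    have C0ge: "0 \<le> C0" unfolding C0_def by simp
    have "0 < pr n \<and> - ln (pr n) \<le> w n"
    proof (cases "n = 0")
      case True
      have b: "exp (-(T+1)\<^sup>2) / 4 \<le> pr 0" unfolding pr_def A0eq by (rule gauss_big[OF P G T0])
      have b0: "0 < exp (-(T+1)\<^sup>2) / 4" by simp
      have "ln (exp (-(T+1)\<^sup>2) / 4) \<le> ln (pr 0)" using b b0 by (intro ln_mono) auto
      moreover have "ln (exp (-(T+1)\<^sup>2) / 4) = - C0" unfolding C0_def by (simp add: ln_div)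
      ultimately have "- ln (pr 0) \<le> C0" by linarith
      moreover have "C0 \<le> w 0"
      proof -
        have "0 \<le> (if 0 \<in> S1 then 2 * pos 0 + 2 * L + 1 else 0)" using pos0[of 0] L1 by simp
        with wge[unfolded True] show ?thesis unfolding w_def by simp
      qed
      moreover have "0 < pr 0" using b b0 by linarith
      ultimately show ?thesis using True by auto
    next
      case False
      show ?thesis
      proof (cases "n \<in> S1")
        case True
        have t1: "t n \<le> 1" by (rule tS1(1)[OF True])
        have pn: "pr n = measure M {\<omega>\<in>space M. cmod (\<xi> n \<omega>) \<le> t n}" unfolding pr_def ASeq[OF False] ..
        have pr0: "0 < pr n"
        proof -
          have "(t n)\<^sup>2 / exp 1 \<le> pr n" unfolding pn by (rule gauss_small[OF P G t0 t1])
          moreover have "0 < (t n)\<^sup>2 / exp 1" using t0[of n] by simp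
          ultimately show ?thesis by linarith
        qed
        have a: "- ln (pr n) \<le> 2 * ln (1 / t n) + 1" unfolding pn by (rule gauss_cost_small[OF P G t0 t1])
        have m: "0 < max (c n) \<delta>" using \<delta>0 by simp
        have "ln (1 / t n) = ln (max (c n) \<delta>) + L"
        proof -
          have "1 / t n = max (c n) \<delta> * (1 / \<delta>)" unfolding t_def using True m \<delta>0 by (simp add: field_simps)
          then have "ln (1 / t n) = ln (max (c n) \<delta>) + ln (1/\<delta>)" using m \<delta>0 by (simp only: ln_mult) simp
          then show ?thesis using \<delta>L by simp
        qed
        moreover have "ln (max (c n) \<delta>) \<le> pos n"
        proof (cases "n \<in> Nset a r")
          case True
          then have "1 < c n" unfolding c_def using r by (simp add: Nset_mem)
          then have "max (c n) \<delta> = c n" using \<delta>1 by simp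
          then show ?thesis unfolding pos_def using True by simp
        next
          case False
          then have "c n \<le> 1" unfolding c_def using r by (simp add: Nset_mem not_less)
          then have "max (c n) \<delta> \<le> 1" using \<delta>1 by simp
          then have "ln (max (c n) \<delta>) \<le> 0" using m by simp
          then show ?thesis unfolding pos_def using False by simp
        qed
        ultimately have "- ln (pr n) \<le> 2 * pos n + 2 * L + 1" using a by linarith
        moreover have "2 * pos n + 2 * L + 1 \<le> w n" unfolding w_def using False True wge by simp
        ultimately show ?thesis using pr0 by linarith
      next
        case nS: False
        have pn: "pr n = measure M {\<omega>\<in>space M. cmod (\<xi> n \<omega>) \<le> t n}" unfolding pr_def ASeq[OF False] ..
        have pr0: "0 < pr n"
        proof -
          have "min (t n) 1 \<le> 1" "0 < min (t n) 1" using t0[of n] by auto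
          then have "(min (t n) 1)\<^sup>2 / exp 1 \<le> measure M {\<omega>\<in>space M. cmod (\<xi> n \<omega>) \<le> min (t n) 1}"
            by (intro gauss_small[OF P G])
          also have "\<dots> \<le> pr n" unfolding pn by (intro finite_measure_mono) auto
          finally show ?thesis using t0[of n] by (smt (verit) divide_pos_pos exp_gt_zero zero_less_power min_less_iff_conj)
        qed
        have a: "- ln (pr n) \<le> 16 * ln (1 + 1 / (t n)\<^sup>2)" unfolding pn by (rule gauss_cost[OF P G t0])
        define y where "y = 1 / (t n)\<^sup>2"
        have y0: "0 \<le> y" unfolding y_def by simp
        have yeq: "y = exp (- (real n * h)) * (7 * N)\<^sup>2"
          unfolding y_def t_def \<delta>_def using nS N1'
          by (simp add: power_mult_distrib field_simps exp_minus power2_eq_square exp_add[symmetric])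
        have ypos: "0 < y" unfolding yeq using N1' by simp
        have l2: "ln ((7 * N)\<^sup>2) = 2 * L" unfolding L_def using N1' by (subst ln_realpow) auto
        have "ln y = ln (exp (- (real n * h))) + ln ((7 * N)\<^sup>2)" unfolding yeq
          by (rule ln_mult_pos) (use N1' in auto)
        then have "ln y = - (real n * h) + 2 * L" using l2 by simp
        then have "p * ln y = - (real n * h * p) + 2" using L1 unfolding p_def by (simp add: field_simps)
        then have "y powr p = exp 2 * q' ^ n"
          using ypos unfolding powr_def q'_def by (simp add: exp_of_nat_mult[symmetric] exp_add[symmetric] mult.assoc)
        moreover have "ln (1 + y) \<le> y powr p / p" by (rule ln_powr_trick[OF y0 p0])
        ultimately have "- ln (pr n) \<le> 16 * (exp 2 * q' ^ n / p)" using a unfolding y_def by simp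
        moreover have "16 * (exp 2 * q' ^ n / p) = w n" unfolding w_def using False nS by simp
        ultimately show ?thesis using pr0 by simp
      qed
    qed
    then show "0 < pr n" "- ln (pr n) \<le> w n" by auto
  qed
  have Nsub: "Nset a r \<subseteq> S1" unfolding S1_def r'_def using r h
    by (intro Nset_mono) (auto simp: field_simps)
  have sumpos: "(\<Sum>n\<in>S1. pos n) = ss a r / 2"
  proof -
    have "(\<Sum>n\<in>S1. pos n) = (\<Sum>n\<in>S1 \<inter> Nset a r. ln (c n))"
      unfolding pos_def by (rule sum.inter_restrict[symmetric]) (rule S1fin)
    also have "S1 \<inter> Nset a r = Nset a r" using Nsub by auto
    finally show ?thesis unfolding ss_def c_def by simp
  qed
  define w1 where "w1 n = (if n \<in> S1 then 2 * pos n + 2 * L + 1 else 0)" for n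
  define w2 where "w2 n = 16 * exp 2 * q' ^ n / p" for n
  have w2s: "summable w2" unfolding w2_def using q'01 
    by (intro summable_divide summable_mult summable_geometric) simp
  have w2e: "w2 = (\<lambda>n. (16 * exp 2 / p) * q' ^ n)" unfolding w2_def by (auto simp: field_simps)
  have w2v: "suminf w2 = 16 * exp 2 / p * (1 / (1 - q'))"
    unfolding w2e using q'01 by (subst suminf_mult) (auto intro: summable_geometric simp: suminf_geometric)
  have w2b: "suminf w2 \<le> 32 * exp 2 * N * L\<^sup>2"
  proof -
    have hp: "0 < h * p" "h * p \<le> 1" using h p0 by (auto intro: mult_le_one)
    have "1 / (1 - q') \<le> 1 + 1 / (h * p)" unfolding q'_def using hp by (intro geo_bound) simp
    also have "\<dots> \<le> 2 / (h * p)" using hp by (simp add: field_simps)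
    finally have g: "1 / (1 - q') \<le> 2 / (h * p)" .
    have "suminf w2 \<le> 16 * exp 2 / p * (2 / (h * p))" unfolding w2v using g p0 by (intro mult_left_mono) auto
    also have "\<dots> = 32 * exp 2 * L\<^sup>2 * (1 / h)" unfolding p_def using L1 h by (simp add: field_simps power2_eq_square)
    also have "\<dots> \<le> 32 * exp 2 * L\<^sup>2 * N" using hN unfolding N_def by (intro mult_left_mono) auto
    finally show ?thesis by (simp add: algebra_simps)
  qed
  have wsplit: "w n = (if n = 0 then C0 else 0) + w1 n + w2 n" for n unfolding w_def w1_def w2_def by simp
  have w1sum: "(\<Sum>n\<in>{..m}. w1 n) \<le> ss a r + 4 * N * (2 * L + 1)" for m
  proof -
    have "(\<Sum>n\<in>{..m}. w1 n) = (\<Sum>n\<in>{..m} \<inter> S1. 2 * pos n + 2 * L + 1)"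
      unfolding w1_def by (rule sum.inter_restrict[symmetric]) simp
    also have "\<dots> \<le> (\<Sum>n\<in>S1. 2 * pos n + 2 * L + 1)"
      using S1fin pos0 L1 by (intro sum_mono2) (auto intro: add_nonneg_nonneg)
    also have "\<dots> = 2 * (\<Sum>n\<in>S1. pos n) + real (card S1) * (2 * L + 1)"
      by (simp add: sum.distrib sum_distrib_left sum_distrib_right algebra_simps)
    also have "\<dots> \<le> ss a r + 4 * N * (2 * L + 1)"
    proof -
      have cS: "real (card S1) \<le> 4 * N" using card unfolding S1_def r'_def N_def .
      have "2 * (\<Sum>n\<in>S1. pos n) = ss a r" using sumpos by simp
      moreover have "real (card S1) * (2 * L + 1) \<le> 4 * N * (2 * L + 1)"
        using cS L1 by (intro mult_right_mono) auto
      ultimately show ?thesis by linarith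
    qed
    finally show ?thesis .
  qed
  have sumcost: "(\<Sum>n\<in>{..m}. - ln (pr n)) \<le> U" for m
  proof -
    have "(\<Sum>n\<in>{..m}. - ln (pr n)) \<le> (\<Sum>n\<in>{..m}. w n)" by (intro sum_mono cost)
    also have "\<dots> = (\<Sum>n\<in>{..m}. (if n = 0 then C0 else 0)) + (\<Sum>n\<in>{..m}. w1 n) + (\<Sum>n\<in>{..m}. w2 n)"
      unfolding wsplit by (simp add: sum.distrib)
    also have "(\<Sum>n\<in>{..m}. (if n = 0 then C0 else 0)) = C0" by (simp add: sum.delta)
    also have "(\<Sum>n\<in>{..m}. w2 n) \<le> suminf w2"
      using w2s by (rule sum_le_suminf) (auto simp: w2_def q'01 p0 less_imp_le)
    finally show ?thesis using w1sum[of m] w2b unfolding U_def C0_def by linarith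
  qed
  have Sset_borel: "Sset n \<in> sets borel" for n
    unfolding Sset_def by (auto intro!: borel_closed closed_Collect_le continuous_intros)
  have Aev: "A n \<in> events" for n
    unfolding A_def by (rule measurable_sets[OF _ Sset_borel]) simp
  have ind: "indep_sets (\<lambda>i. {\<xi> i -` X \<inter> space M | X. X \<in> sets borel}) UNIV"
    using I unfolding indep_vars_def2 by simp
  have prodeq: "prob (\<Inter>n\<in>{..m}. A n) = (\<Prod>n\<in>{..m}. prob (A n))" for m
  proof -
    have "A \<in> Pi {..m} (\<lambda>i. {\<xi> i -` X \<inter> space M | X. X \<in> sets borel})"
      unfolding A_def using Sset_borel by auto
    moreover have gen: "\<forall>J. J \<noteq> {} \<longrightarrow> finite J \<longrightarrow> (\<forall>B\<in>Pi J (\<lambda>i. {\<xi> i -` X \<inter> space M | X. X \<in> sets borel}).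
        prob (\<Inter>j\<in>J. B j) = (\<Prod>j\<in>J. prob (B j)))"
      using ind unfolding indep_sets_def by simp
    ultimately show ?thesis by (intro gen[rule_format]) auto
  qed
  define D where "D m = (\<Inter>n\<in>{..m}. A n)" for m
  have Dlow: "exp (- U) \<le> prob (D m)" for m
  proof -
    have "prob (D m) = (\<Prod>n\<in>{..m}. exp (ln (pr n)))"
      unfolding D_def prodeq pr_def[symmetric] using prpos by (intro prod.cong) auto
    also have "\<dots> = exp (\<Sum>n\<in>{..m}. ln (pr n))" by (simp add: exp_sum)
    finally have "prob (D m) = exp (\<Sum>n\<in>{..m}. ln (pr n))" .
    moreover have "- U \<le> (\<Sum>n\<in>{..m}. ln (pr n))" using sumcost[of m] by (simp add: sum_negf)
    ultimately show ?thesis by simp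
  qed
  have Dsets: "range D \<subseteq> events" unfolding D_def using Aev by auto
  have Ddec: "decseq D" unfolding D_def decseq_def by auto
  have DB: "(\<Inter>m. D m) = (\<Inter>n. A n)" unfolding D_def by auto
  have lim: "(\<lambda>m. prob (D m)) \<longlonglongrightarrow> prob (\<Inter>n. A n)"
    using finite_Lim_measure_decseq[OF Dsets Ddec] unfolding DB .
  have Blow: "exp (- U) \<le> prob (\<Inter>n. A n)"
    by (rule LIMSEQ_le_const[OF lim]) (use Dlow in auto)
  define Ev where "Ev = {\<omega>\<in>space M. \<forall>z. cmod z < r \<longrightarrow> gaf a \<xi> \<omega> z \<noteq> 0}"
  have BEv: "(\<Inter>n. A n) \<subseteq> Ev" unfolding Ev_def using nonzero A_def by auto
  have p0eq: "p0 M a \<xi> r = - ln (prob Ev)" unfolding p0_def Ev_def ..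
  have U0: "0 \<le> U"
  proof -
    have "0 \<le> (\<Sum>n\<in>Nset a r. ln (cmod (a n) * r ^ n))"
      by (rule sum_nonneg) (simp add: Nset_def less_imp_le)
    then have "0 \<le> ss a r" unfolding ss_def by simp
    then show ?thesis unfolding U_def using L1 N1' by (auto intro!: add_nonneg_nonneg mult_nonneg_nonneg)
  qed
  have "p0 M a \<xi> r \<le> U"
  proof (cases "Ev \<in> events")
    case True
    have "prob (\<Inter>n. A n) \<le> prob Ev" using True BEv by (intro finite_measure_mono)
    with Blow have "exp (- U) \<le> prob Ev" by linarith
    then have "ln (exp (- U)) \<le> ln (prob Ev)" by (intro ln_mono) auto
    then show ?thesis unfolding p0eq by simp
  next
    case False
    then have "prob Ev = 0" by (rule measure_notin_sets)
    then show ?thesis unfolding p0eq using U0 by simp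
  qed
  then show ?thesis unfolding U_def N_def L_def T_def .
qed



theorem theorem4p1:
  fixes M :: "'w measure" and \<xi> :: "nat \<Rightarrow> 'w \<Rightarrow> complex"
    and a :: "nat \<Rightarrow> complex" and \<epsilon> :: real
  assumes "\<epsilon> > 0"
    and "prob_space M"
    and "prob_space.indep_vars M (\<lambda>_. borel) \<xi> UNIV"
    and "\<And>n. std_complex_gaussian M (\<xi> n)"
    and "infinite {n. a n \<noteq> 0}"
    and "limsup (\<lambda>n. ereal (root n (cmod (a n)))) = 0"
    and "a 0 \<noteq> 0"
  shows "\<exists>E. E \<subseteq> {1<..} \<and> finite_log_measure E \<and>
           (\<forall>r \<in> {1<..} - E.
              p0 M a \<xi> r \<le> ss a r + real (NN a r) * exp ((2 + \<epsilon>) * sqrt (ln (real (NN a r)))))"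
proof -
  note eps = assms(1) and P = assms(2) and I = assms(3) and G = assms(4) and inf = assms(5)
    and L = assms(6) and a0 = assms(7)
  define C0 where "C0 = (2/cmod (a 0) + 1)\<^sup>2 + ln 4"
  obtain X where X: "\<And>x. x \<ge> X \<Longrightarrow> C0 + 4 * x * (2 * ln (7 * x) + 1) + 32 * exp 2 * x * (ln (7 * x))\<^sup>2
                   \<le> x * exp ((2 + \<epsilon>) * sqrt (ln x))"
    using asymp_bound[OF eps, of C0] by blast
  define N0 where "N0 = max 2 (nat \<lceil>X\<rceil>)"
  have N02: "N0 \<ge> 2" unfolding N0_def by simp
  have mono: "NN a x \<le> NN a y" if "1 \<le> x" "x \<le> y" for x y
    using NN_mono[OF L, of x y] that by simp
  have unb: "\<exists>r\<ge>1. K \<le> NN a r" for K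
  proof -
    obtain r where r: "r > 1" "K \<le> NN a r \<or> infinite (Nset a r)" using NN_unbounded[OF inf] by blast
    have "finite (Nset a r)" using Nset_finite[OF L] r by simp
    with r show ?thesis by (intro exI[of _ r]) auto
  qed
  obtain E where E: "E \<subseteq> {1<..}" "finite_log_measure E"
    and Eprop: "\<And>r. r \<in> {1<..} - E \<Longrightarrow> N0 \<le> NN a r \<and> (\<exists>h. 0 < h \<and> h \<le> 1/2 \<and> 1/h \<le> real (NN a r) \<and> NN a (r/(1-h)) \<le> 4 * NN a r)"
    using exc_set[of "NN a", OF mono unb N02] by blast
  have "p0 M a \<xi> r \<le> ss a r + real (NN a r) * exp ((2 + \<epsilon>) * sqrt (ln (real (NN a r))))"
    if r: "r \<in> {1<..} - E" for r
  proof -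
    obtain h where h: "0 < h" "h \<le> 1/2" "1/h \<le> real (NN a r)" "NN a (r/(1-h)) \<le> 4 * NN a r"
      and N0r: "N0 \<le> NN a r" using Eprop[OF r] by blast
    have r0: "r > 0" using r by simp
    have N1: "1 \<le> real (NN a r)" using N0r N02 by simp
    have r'0: "r/(1-h) > 0" using r0 h by simp
    have fin: "finite (Nset a (r/(1-h)))" by (rule Nset_finite[OF L r'0])
    have fin0: "finite (Nset a r)" by (rule Nset_finite[OF L r0])
    have card: "real (card (Nset a (r/(1-h)))) \<le> 4 * real (NN a r)"
      using h(4) unfolding NN_def by (simp add: of_nat_le_iff[symmetric])
    have c: "p0 M a \<xi> r \<le> ss a r + C0 + 4 * real (NN a r) * (2 * ln (7 * real (NN a r)) + 1)
           + 32 * exp 2 * real (NN a r) * (ln (7 * real (NN a r)))\<^sup>2"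
      unfolding C0_def by (rule core[OF P I G a0 r0 h(1,2) N1 h(3) fin fin0 card])
    have "X \<le> real (NN a r)"
    proof -
      have "X \<le> real (nat \<lceil>X\<rceil>)" by linarith
      also have "\<dots> \<le> real N0" unfolding N0_def by simp
      also have "\<dots> \<le> real (NN a r)" using N0r by simp
      finally show ?thesis .
    qed
    from X[OF this] c show ?thesis by linarith
  qed
  with E show ?thesis by blast
qed


end
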